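(* Let $d\geq 3$ and $n_1\geq\cdots\geq n_d\geq 2$ be integers, let $N=\prod_{i=1}^{d-1}n_i$, and let $\tilde f$ be a $Q_{d-1}$-magic vertex labeling of $\textsc{Grid}(n_1,\ldots,n_{d-1})$ with $Q_{d-1}$-magic sum $S$. Define $f:[n_1]\times\cdots\times[n_d]\to\{1,\ldots,\prod_{i=1}^d n_i\}$ by $$f(x_1,\ldots,x_d)=\begin{cases}\tilde f(x_1,\ldots,x_{d-1})+(x_d-1)N & \text{if } x_1+\cdots+x_{d-1}\text{ is even},\\ \tilde f(x_1,\ldots,x_{d-1})+(n_d-x_d)N & \text{if } x_1+\cdots+x_{d-1}\text{ is odd}.\end{cases}$$ Then $f$ is a $Q_d$-magic vertex labeling of $\textsc{Grid}(n_1,\ldots,n_d)$ with $Q_d$-magic sum $2S+2^{d-1}(n_d-1)N$.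
   Context: $[k]=\{1,\ldots,k\}$. The grid graph $\textsc{Grid}(n_1,\ldots,n_m)$ has vertex set $[n_1]\times\cdots\times[n_m]$ and edge set $\{\{\mathbf x,\mathbf y\}:\sum_{i=1}^m|x_i-y_i|=1\}$. The $m$-cube $Q_m$ is $\textsc{Grid}(2,\ldots,2)$ ($m$ entries). A bijection $f:V\to\{1,\ldots,|V|\}$ on the vertex set of a graph $G=(V,E)$ is an $H$-magic vertex labeling if there is a constant $c$ (the $H$-magic sum) with $\sum_{v\in V(H')}f(v)=c$ for every subgraph $H'\subseteq G$ isomorphic to $H$. *)

theory Defs
  imports Main
begin

text \<open>Simple graphs are pairs (V, E) with E a set of 2-element subsets of V.
Grid vertices are lists xs of length m with 1 \<le> xs!i \<le> ns!i (coordinate i+1 of the paper is xs!i).\<close>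

type_synonym 'a graph = "'a set \<times> 'a set set"

definition grid_verts :: "nat list \<Rightarrow> nat list set" where
  "grid_verts ns = {xs. length xs = length ns \<and> (\<forall>i<length ns. 1 \<le> xs!i \<and> xs!i \<le> ns!i)}"

definition grid_edges :: "nat list \<Rightarrow> nat list set set" where
  "grid_edges ns = {{xs, ys} | xs ys. xs \<in> grid_verts ns \<and> ys \<in> grid_verts ns \<and>
      (\<Sum>i<length ns. nat \<bar>int (xs!i) - int (ys!i)\<bar>) = 1}"

definition Grid :: "nat list \<Rightarrow> nat list graph" where
  "Grid ns = (grid_verts ns, grid_edges ns)"

definition cube :: "nat \<Rightarrow> nat list graph" where
  "cube m = Grid (replicate m 2)"

definition subgraph :: "'a graph \<Rightarrow> 'a graph \<Rightarrow> bool" where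
  "subgraph H G \<longleftrightarrow> fst H \<subseteq> fst G \<and> snd H \<subseteq> snd G \<and> (\<forall>e\<in>snd H. e \<subseteq> fst H)"

definition graph_iso :: "'a graph \<Rightarrow> 'b graph \<Rightarrow> bool" where
  "graph_iso G H \<longleftrightarrow> (\<exists>\<phi>. bij_betw \<phi> (fst G) (fst H) \<and>
      (\<forall>u\<in>fst G. \<forall>v\<in>fst G. {u, v} \<in> snd G \<longleftrightarrow> {\<phi> u, \<phi> v} \<in> snd H))"

definition magic_labeling :: "'a graph \<Rightarrow> 'b graph \<Rightarrow> ('a \<Rightarrow> nat) \<Rightarrow> nat \<Rightarrow> bool" where
  "magic_labeling G H f c \<longleftrightarrow> bij_betw f (fst G) {1..card (fst G)} \<and>
     (\<forall>H'. subgraph H' G \<and> graph_iso H' H \<longrightarrow> (\<Sum>v\<in>fst H'. f v) = c)"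

end

theory Submission
  imports Defs
begin

definition LS :: "nat \<Rightarrow> (nat \<Rightarrow> 'a set) \<Rightarrow> 'a list set" where
  "LS m S = {xs. length xs = m \<and> (\<forall>i<m. xs!i \<in> S i)}"

lemma LS_Suc: "LS (Suc m) S = (\<lambda>(x,xs). x#xs) ` (S 0 \<times> LS m (\<lambda>i. S (Suc i)))"
proof (rule set_eqI, rule iffI)
  fix xs assume "xs \<in> LS (Suc m) S"
  then show "xs \<in> (\<lambda>(x,xs). x#xs) ` (S 0 \<times> LS m (\<lambda>i. S (Suc i)))"
    unfolding LS_def by (cases xs) (auto intro!: image_eqI[where x="(hd xs, tl xs)"])
next
  fix xs assume "xs \<in> (\<lambda>(x,xs). x#xs) ` (S 0 \<times> LS m (\<lambda>i. S (Suc i)))"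
  then show "xs \<in> LS (Suc m) S" unfolding LS_def
    by (auto simp: nth_Cons split: nat.splits)
qed

lemma LS_card: "(\<forall>i<m. finite (S i)) \<Longrightarrow> finite (LS m S) \<and> card (LS m S) = (\<Prod>i<m. card (S i))"
proof (induction m arbitrary: S)
  case 0
  have "LS 0 S = {[]}" unfolding LS_def by auto
  then show ?case by simp
next
  case (Suc m)
  have inj: "inj_on (\<lambda>(x,xs). x#xs) (S 0 \<times> LS m (\<lambda>i. S (Suc i)))"
    by (auto simp: inj_on_def)
  from Suc.prems have "\<forall>i<m. finite (S (Suc i))" by auto
  from Suc.IH[OF this] have ih: "finite (LS m (\<lambda>i. S (Suc i)))"
     "card (LS m (\<lambda>i. S (Suc i))) = (\<Prod>i<m. card (S (Suc i)))" by auto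
  have f0: "finite (S 0)" using Suc.prems by auto
  show ?case unfolding LS_Suc using ih f0
    by (simp add: card_image[OF inj] card_cartesian_product prod.lessThan_Suc_shift del: prod.lessThan_Suc)
qed

lemma prod_list_nth: "prod_list ns = (\<Prod>i<length ns. ns!i)"
  by (induction ns) (simp_all add: prod.lessThan_Suc_shift del: prod.lessThan_Suc)

lemma grid_verts_LS: "grid_verts ns = LS (length ns) (\<lambda>i. {1..ns!i})"
  unfolding grid_verts_def LS_def by auto

lemma card_grid: "finite (grid_verts ns) \<and> card (grid_verts ns) = prod_list ns"
  using LS_card[of "length ns" "\<lambda>i. {1..ns!i}"] by (simp add: grid_verts_LS prod_list_nth)

definition gadj :: "nat list \<Rightarrow> nat list \<Rightarrow> bool" where
  "gadj u v \<longleftrightarrow> length v = length u \<and> (\<exists>i<length u. (u!i = Suc (v!i) \<or> v!i = Suc (u!i)) \<and>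
      (\<forall>j<length u. j \<noteq> i \<longrightarrow> u!j = v!j))"

lemma gadj_sym: "gadj u v \<Longrightarrow> gadj v u"
  unfolding gadj_def by (metis)

lemma dist1_iff:
  assumes "length u = m" "length v = m"
  shows "(\<Sum>i<m. nat \<bar>int (u!i) - int (v!i)\<bar>) = 1 \<longleftrightarrow> gadj u v"
proof -
  have "(\<Sum>i<m. nat \<bar>int (u!i) - int (v!i)\<bar>) = 1 \<longleftrightarrow>
     (\<exists>i\<in>{..<m}. nat \<bar>int (u!i) - int (v!i)\<bar> = 1 \<and> (\<forall>j\<in>{..<m}. i \<noteq> j \<longrightarrow> nat \<bar>int (u!j) - int (v!j)\<bar> = 0))"
    by (rule sum_eq_1_iff) simp
  also have "\<dots> \<longleftrightarrow> gadj u v"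
  proof
    assume "\<exists>i\<in>{..<m}. nat \<bar>int (u!i) - int (v!i)\<bar> = 1 \<and> (\<forall>j\<in>{..<m}. i \<noteq> j \<longrightarrow> nat \<bar>int (u!j) - int (v!j)\<bar> = 0)"
    then obtain i where i: "i < m" "nat \<bar>int (u!i) - int (v!i)\<bar> = 1"
      "\<forall>j<m. i \<noteq> j \<longrightarrow> nat \<bar>int (u!j) - int (v!j)\<bar> = 0" by auto
    then have "u!i = Suc (v!i) \<or> v!i = Suc (u!i)" by linarith
    moreover have "\<forall>j<m. j \<noteq> i \<longrightarrow> u!j = v!j" using i(3) by force
    ultimately show "gadj u v" unfolding gadj_def using assms i(1) by auto
  next
    assume "gadj u v"
    then obtain i where i: "i < m" "u!i = Suc (v!i) \<or> v!i = Suc (u!i)" "\<forall>j<m. j \<noteq> i \<longrightarrow> u!j = v!j"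
      unfolding gadj_def using assms by auto
    show "\<exists>i\<in>{..<m}. nat \<bar>int (u!i) - int (v!i)\<bar> = 1 \<and> (\<forall>j\<in>{..<m}. i \<noteq> j \<longrightarrow> nat \<bar>int (u!j) - int (v!j)\<bar> = 0)"
      using i by (intro bexI[of _ i]) auto
  qed
  finally show ?thesis .
qed

lemma edge_iff: "{u,v} \<in> grid_edges ns \<longleftrightarrow> u \<in> grid_verts ns \<and> v \<in> grid_verts ns \<and> gadj u v"
proof
  assume "{u,v} \<in> grid_edges ns"
  then obtain xs ys where e: "{u,v} = {xs,ys}" "xs \<in> grid_verts ns" "ys \<in> grid_verts ns"
    "(\<Sum>i<length ns. nat \<bar>int (xs!i) - int (ys!i)\<bar>) = 1" unfolding grid_edges_def by blast
  then have "gadj xs ys" using dist1_iff[of xs "length ns" ys] by (auto simp: grid_verts_def)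
  with e show "u \<in> grid_verts ns \<and> v \<in> grid_verts ns \<and> gadj u v"
    by (auto simp: doubleton_eq_iff intro: gadj_sym)
next
  assume a: "u \<in> grid_verts ns \<and> v \<in> grid_verts ns \<and> gadj u v"
  then have "(\<Sum>i<length ns. nat \<bar>int (u!i) - int (v!i)\<bar>) = 1"
    using dist1_iff[of u "length ns" v] by (auto simp: grid_verts_def)
  with a show "{u,v} \<in> grid_edges ns" unfolding grid_edges_def by blast
qed


lemma gadj_len: "gadj u v \<Longrightarrow> length v = length u"
  unfolding gadj_def by auto

lemma gadj_axis: assumes "gadj u v" "i < length u" "u!i \<noteq> v!i" shows
   "(\<forall>j<length u. j\<noteq>i \<longrightarrow> u!j = v!j) \<and> (v!i = Suc(u!i) \<or> u!i = Suc(v!i))"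
proof -
  from assms(1) obtain k where k: "k<length u" "u!k = Suc(v!k) \<or> v!k = Suc(u!k)"
    "\<forall>j<length u. j\<noteq>k \<longrightarrow> u!j=v!j" unfolding gadj_def by blast
  have "k = i" using k(3) assms(2,3) by blast
  then show ?thesis using k by auto
qed

lemma gadj_ex: "gadj u v \<Longrightarrow> \<exists>i<length u. u!i \<noteq> v!i"
  unfolding gadj_def by force

lemma gadj_neq: "gadj u v \<Longrightarrow> u \<noteq> v"
  using gadj_ex by blast

lemma gadj_upd: "i < length u \<Longrightarrow> (x = Suc (u!i) \<or> u!i = Suc x) \<Longrightarrow> gadj u (u[i := x])"
  unfolding gadj_def by (rule conjI, simp, rule exI[of _ i]) auto

lemma gadj_eq_upd: "gadj u v \<Longrightarrow> i < length u \<Longrightarrow> u!i \<noteq> v!i \<Longrightarrow> v = u[i := v!i]"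
  using gadj_axis[of u v i] gadj_len[of u v] by (intro nth_equalityI) (auto simp: nth_list_update)

lemma fact_c:
  assumes "gadj v u" "gadj v w" "gadj u z" "gadj w z" "u \<noteq> w" "z \<noteq> v" "i < length v"
    "u!i \<noteq> v!i" "w!i \<noteq> v!i"
  shows False
proof -
  have lu: "length u = length v" and lw: "length w = length v" and lz: "length z = length v"
    using assms(1-4) gadj_len by metis+
  have u: "u = v[i := u!i]" and w: "w = v[i := w!i]" using gadj_eq_upd assms by auto
  have ui: "u!i = Suc(v!i) \<or> v!i = Suc(u!i)" "w!i = Suc(v!i) \<or> v!i = Suc(w!i)"
    using gadj_axis[OF assms(1) assms(7)] gadj_axis[OF assms(2) assms(7)] assms(8,9) by auto
  have uwi: "u!i \<noteq> w!i" using u w assms(5) by metis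
  obtain k where k: "k < length v" "u!k \<noteq> z!k" using gadj_ex[OF assms(3)] lu by auto
  have z: "z = u[k := z!k]" using gadj_eq_upd assms(3) k lu by auto
  show False
  proof (cases "k = i")
    case False
    have "z!i = u!i" using z False by (metis nth_list_update_neq)
    then have "w!i \<noteq> z!i" using uwi by simp
    then have "w!k = z!k" using gadj_axis[OF assms(4), of i] lw k False assms(7) by auto
    moreover have "w!k = u!k" using u w False by (metis nth_list_update_neq)
    ultimately show False using k by simp
  next
    case True
    have zv: "z = v[i := z!i]" using z u True by (metis list_update_overwrite)
    then have "z!i \<noteq> v!i" using assms(6) by (metis list_update_id)
    have zi: "z!i = Suc(u!i) \<or> u!i = Suc(z!i)" using gadj_axis[OF assms(3), of i] k True lu by auto
    have "w!i \<noteq> z!i" using w zv gadj_neq[OF assms(4)] by metis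
    then have "z!i = Suc(w!i) \<or> w!i = Suc(z!i)" using gadj_axis[OF assms(4), of i] lw assms(7) by auto
    then show False using ui uwi zi \<open>z!i \<noteq> v!i\<close> by linarith
  qed
qed

lemma fact_d:
  assumes "gadj y x" "gadj y w" "gadj x z" "gadj w z" "z \<noteq> y" "i \<noteq> j"
    "i < length y" "j < length y" "x = y[j := p]" "w = y[i := q]" "p \<noteq> y!j" "q \<noteq> y!i"
  shows "z = y[j := p, i := q]"
proof -
  have lx: "length x = length y" and lw: "length w = length y" and lz: "length z = length y"
    using assms(1-4) gadj_len by metis+
  obtain k where k: "k < length y" "x!k \<noteq> z!k" using gadj_ex[OF assms(3)] lx by auto
  have zx: "z = x[k := z!k]" using gadj_eq_upd assms(3) k lx by auto
  obtain l where l: "l < length y" "w!l \<noteq> z!l" using gadj_ex[OF assms(4)] lw by auto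
  have zw: "z = w[l := z!l]" using gadj_eq_upd assms(4) l lw by auto
  have xj: "x!j = p" "x!i = y!i" using assms by auto
  have wi: "w!i = q" "w!j = y!j" using assms by auto
  have "k = i"
  proof (rule ccontr)
    assume "k \<noteq> i"
    then have "z!i = y!i" using zx xj by (metis nth_list_update_neq)
    then have "l = i" using zw wi assms(12) by (metis nth_list_update_neq)
    then have "z!j = y!j" using zw wi assms(6) by (metis nth_list_update_neq)
    then have "k = j" using zx xj assms(11) by (metis nth_list_update_neq)
    have "z = y" using zx \<open>k = j\<close> \<open>z!j = y!j\<close> assms(9) by (metis list_update_overwrite list_update_id)
    then show False using assms(5) by simp
  qed
  have "l = j"
  proof (rule ccontr)
    assume "l \<noteq> j"
    then have "z!j = y!j" using zw wi by (metis nth_list_update_neq)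
    then show False using zx \<open>k = i\<close> xj assms(6,11) by (metis nth_list_update_neq)
  qed
  have "z!i = q" using zw \<open>l = j\<close> wi assms(6) by (metis nth_list_update_neq)
  then show ?thesis using zx \<open>k = i\<close> assms(9) by simp
qed



definition box :: "nat list \<Rightarrow> nat list set" where
  "box a = {xs. length xs = length a \<and> (\<forall>i<length a. xs!i = a!i \<or> xs!i = Suc (a!i))}"

lemma core:
  fixes V :: "nat list set" and A :: "nat list \<Rightarrow> nat list \<Rightarrow> bool"
  assumes fin: "finite V" and cardV: "card V = 2^m" and len: "\<forall>v\<in>V. length v = m"
    and Ap: "\<And>u v. A u v \<Longrightarrow> u\<in>V \<and> v\<in>V \<and> gadj u v" and sym: "\<And>u v. A u v \<Longrightarrow> A v u"
    and deg: "\<And>v. v\<in>V \<Longrightarrow> card {u. A v u} = m"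
    and sq: "\<And>v u w. v\<in>V \<Longrightarrow> A v u \<Longrightarrow> A v w \<Longrightarrow> u \<noteq> w \<Longrightarrow> (\<exists>z. z \<noteq> v \<and> A u z \<and> A w z)"
  shows "\<exists>a. length a = m \<and> V = box a"
proof -
  have uniq: "u = w" if h: "v\<in>V" "A v u" "A v w" "u!i \<noteq> v!i" "w!i \<noteq> v!i" "i<m" for v u w i
  proof (rule ccontr)
    assume "u \<noteq> w"
    then obtain z where z: "z \<noteq> v" "A u z" "A w z" using sq[OF h(1-3)] by blast
    have g: "gadj v u" "gadj v w" "gadj u z" "gadj w z" using Ap[OF h(2)] Ap[OF h(3)] Ap[OF z(2)] Ap[OF z(3)] by auto
    have "i < length v" using len h by auto
    from fact_c[OF g \<open>u \<noteq> w\<close> z(1) this h(4,5)] show False .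
  qed
  have G1: "\<exists>u. A v u \<and> u!i \<noteq> v!i" if v: "v\<in>V" and i: "i<m" for v i
  proof (rule ccontr)
    assume "\<not> (\<exists>u. A v u \<and> u!i \<noteq> v!i)"
    then have nb: "\<forall>u. A v u \<longrightarrow> u!i = v!i" by blast
    define N where "N = {u. A v u}"
    have finN: "finite N" using fin Ap unfolding N_def by (metis (mono_tags, lifting) mem_Collect_eq rev_finite_subset subsetI)
    define ax where "ax u = (LEAST j. u!j \<noteq> v!j)" for u
    have axp: "ax u < m \<and> u!(ax u) \<noteq> v!(ax u)" if "u \<in> N" for u
    proof -
      have g: "gadj v u" and lv: "length v = m" using that Ap len v unfolding N_def by auto
      obtain j where j: "j < m" "v!j \<noteq> u!j" using gadj_ex[OF g] lv by auto
      have "u!(ax u) \<noteq> v!(ax u)" unfolding ax_def by (rule LeastI[of _ j]) (use j in auto)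
      moreover have "ax u \<le> j" unfolding ax_def by (rule Least_le) (use j in auto)
      ultimately show ?thesis using j by auto
    qed
    have "ax ` N \<subseteq> {..<m} - {i}"
      using axp nb unfolding N_def by fastforce
    moreover have "inj_on ax N"
    proof (rule inj_onI)
      fix u w assume "u \<in> N" "w \<in> N" "ax u = ax w"
      then have "ax u < m" "u!(ax u) \<noteq> v!(ax u)" "w!(ax u) \<noteq> v!(ax u)" "A v u" "A v w"
        using axp[of u] axp[of w] unfolding N_def by auto
      then show "u = w" using uniq[OF v, of u w "ax u"] by blast
    qed
    ultimately have "card N \<le> card ({..<m} - {i})"
      by (metis card_inj_on_le finite_Diff finite_lessThan)
    also have "\<dots> < m" using i by simp
    finally show False using deg[OF v] unfolding N_def by simp
  qed
  have "V \<noteq> {}" using cardV by auto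
  then obtain v0 where v0: "v0 \<in> V" by blast
  have lv0: "length v0 = m" using len v0 by auto
  define nb where "nb i = (SOME u. A v0 u \<and> u!i \<noteq> v0!i)" for i
  define t where "t i = nb i ! i" for i
  have nbp: "A v0 (nb i) \<and> nb i ! i \<noteq> v0!i" if "i<m" for i
    unfolding nb_def by (rule someI_ex) (use G1[OF v0 that] in auto)
  have nbeq: "nb i = v0[i := t i]" if "i<m" for i
    using gadj_eq_upd[of v0 "nb i" i] nbp[OF that] Ap lv0 that unfolding t_def by auto
  have tS: "t i = Suc(v0!i) \<or> v0!i = Suc(t i)" if "i<m" for i
    using gadj_axis[of v0 "nb i" i] nbp[OF that] Ap lv0 that unfolding t_def by auto
  define oth where "oth i y = (if y = v0!i then t i else v0!i)" for i y
  define B where "B = {xs. length xs = m \<and> (\<forall>i<m. xs!i = v0!i \<or> xs!i = t i)}"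
  define cnt where "cnt x = card {i. i<m \<and> x!i \<noteq> v0!i}" for x
  have claim: "\<forall>x. cnt x = k \<longrightarrow> x\<in>B \<longrightarrow> x\<in>V \<and> (\<forall>i<m. A x (x[i := oth i (x!i)]))" for k
  proof (induction k rule: less_induct)
    case (less k)
    show ?case
    proof (intro allI impI)
      fix x assume ck: "cnt x = k" and xB: "x \<in> B"
      have lx: "length x = m" using xB B_def by auto
      show "x\<in>V \<and> (\<forall>i<m. A x (x[i := oth i (x!i)]))"
      proof (cases "\<forall>j<m. x!j = v0!j")
        case True
        then have "x = v0" using lx lv0 by (intro nth_equalityI) auto
        then show ?thesis using v0 nbeq nbp unfolding oth_def by auto
      next
        case False
        then obtain j where j: "j<m" "x!j \<noteq> v0!j" by blast
        have xj: "x!j = t j" using xB j unfolding B_def by auto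
        define y where "y = x[j := v0!j]"
        have ly: "length y = m" using lx y_def by simp
        have yB: "y \<in> B" using xB j unfolding B_def y_def by (auto simp: nth_list_update)
        have "{i. i<m \<and> y!i \<noteq> v0!i} \<subset> {i. i<m \<and> x!i \<noteq> v0!i}"
          using j lx unfolding y_def by (auto simp: nth_list_update split: if_splits)
        then have "cnt y < k" using ck unfolding cnt_def by (metis (no_types, lifting) finite_nat_set_iff_bounded mem_Collect_eq psubset_card_mono)
        with less.IH have IH: "y\<in>V \<and> (\<forall>i<m. A y (y[i := oth i (y!i)]))" using yB by blast
        have "oth j (y!j) = t j" using j lx unfolding y_def oth_def by simp
        then have yjx: "y[j := oth j (y!j)] = x" unfolding y_def using xj by (metis list_update_id list_update_overwrite)
        have "A y (y[j := oth j (y!j)])" using IH j by blast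
        then have Ayx: "A y x" using yjx by simp
        then have xV: "x \<in> V" using Ap by blast
        have tj: "t j \<noteq> v0!j" using tS[OF j(1)] by fastforce
        have yV: "y \<in> V" using IH by blast
        have "A x (x[i := oth i (x!i)])" if i: "i<m" for i
        proof (cases "i = j")
          case True
          have "oth j (x!j) = v0!j" using j(2) unfolding oth_def by simp
          then have "x[i := oth i (x!i)] = y" using True unfolding y_def by simp
          then show ?thesis using sym[OF Ayx] by simp
        next
          case False
          define w where "w = y[i := oth i (y!i)]"
          have Ayw: "A y w" using IH i w_def by blast
          have yi: "y!i = x!i" using False unfolding y_def by simp
          have "w!j = v0!j" unfolding w_def y_def using False j lx by simp
          then have "x \<noteq> w" using j(2) by auto
          from sq[OF yV Ayx Ayw this] obtain z where z: "z \<noteq> y" "A x z" "A w z" by blast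
          have "t i \<noteq> v0!i" using tS[OF i] by fastforce
          then have qn: "oth i (y!i) \<noteq> y!i" unfolding oth_def by auto
          have g: "gadj y x" "gadj y w" "gadj x z" "gadj w z"
            using Ap[OF Ayx] Ap[OF Ayw] Ap[OF z(2)] Ap[OF z(3)] by auto
          have xe: "x = y[j := t j]" using yjx \<open>oth j (y!j) = t j\<close> by simp
          have yj: "t j \<noteq> y!j" using tj j lx unfolding y_def by simp
          have il: "i < length y" "j < length y" using i j ly by auto
          have "z = y[j := t j, i := oth i (y!i)]"
            by (rule fact_d[OF g z(1) False il xe w_def yj qn])
          also have "\<dots> = x[i := oth i (x!i)]" by (simp only: yi xe[symmetric])
          finally show ?thesis using z by simp
        qed
        then show ?thesis using xV by blast
      qed
    qed
  qed
  have BV: "B \<subseteq> V" using claim by blast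
  have BLS: "B = LS m (\<lambda>i. {v0!i, t i})" unfolding B_def LS_def by auto
  have "card B = (\<Prod>i<m. card {v0!i, t i})" using LS_card[of m "\<lambda>i. {v0!i, t i}"] BLS by simp
  also have "\<dots> = (\<Prod>i<m. 2)"
  proof (intro prod.cong refl)
    fix i assume "i \<in> {..<m}"
    then have "t i \<noteq> v0!i" using tS by fastforce
    then show "card {v0!i, t i} = 2" by simp
  qed
  finally have "card B = 2^m" by simp
  then have BeqV: "B = V" using card_subset_eq[OF fin BV] cardV by simp
  define a where "a = map (\<lambda>i. min (v0!i) (t i)) [0..<m]"
  have "box a = B" unfolding box_def B_def a_def
  proof (intro set_eqI iffI)
    fix xs assume "xs \<in> {xs. length xs = length (map (\<lambda>i. min (v0 ! i) (t i)) [0..<m]) \<and>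
      (\<forall>i<length (map (\<lambda>i. min (v0 ! i) (t i)) [0..<m]). xs ! i = map (\<lambda>i. min (v0 ! i) (t i)) [0..<m] ! i \<or>
      xs ! i = Suc (map (\<lambda>i. min (v0 ! i) (t i)) [0..<m] ! i))}"
    then show "xs \<in> {xs. length xs = m \<and> (\<forall>i<m. xs ! i = v0 ! i \<or> xs ! i = t i)}"
      using tS by auto (metis min_def Suc_n_not_le_n le_SucI nat_le_linear)
  next
    fix xs assume "xs \<in> {xs. length xs = m \<and> (\<forall>i<m. xs ! i = v0 ! i \<or> xs ! i = t i)}"
    then show "xs \<in> {xs. length xs = length (map (\<lambda>i. min (v0 ! i) (t i)) [0..<m]) \<and>
      (\<forall>i<length (map (\<lambda>i. min (v0 ! i) (t i)) [0..<m]). xs ! i = map (\<lambda>i. min (v0 ! i) (t i)) [0..<m] ! i \<or>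
      xs ! i = Suc (map (\<lambda>i. min (v0 ! i) (t i)) [0..<m] ! i))}"
      using tS by auto (metis min_def Suc_n_not_le_n le_SucI nat_le_linear)
  qed
  note boxB = this
  show ?thesis
  proof (intro exI conjI)
    show "length a = m" unfolding a_def by simp
    show "V = box a" using BeqV boxB by simp
  qed
qed



lemma cube_v: "c \<in> fst (cube m) \<longleftrightarrow> length c = m \<and> (\<forall>i<m. c!i = 1 \<or> c!i = 2)"
  unfolding cube_def Grid_def grid_verts_def by (auto simp: le_Suc_eq)

lemma cube_e: "{c,c'} \<in> snd (cube m) \<longleftrightarrow> c \<in> fst (cube m) \<and> c' \<in> fst (cube m) \<and> gadj c c'"
  unfolding cube_def Grid_def using edge_iff by simp

lemma cube_card: "finite (fst (cube m)) \<and> card (fst (cube m)) = 2^m"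
  using card_grid[of "replicate m 2"] unfolding cube_def Grid_def by simp

definition flip :: "nat list \<Rightarrow> nat \<Rightarrow> nat list" where
  "flip c i = c[i := 3 - c!i]"

lemma flip_in: "c \<in> fst (cube m) \<Longrightarrow> i < m \<Longrightarrow> flip c i \<in> fst (cube m)"
  unfolding cube_v flip_def by (auto simp: nth_list_update)

lemma flip_adj: "c \<in> fst (cube m) \<Longrightarrow> i < m \<Longrightarrow> gadj c (flip c i)"
  unfolding flip_def using cube_v[of c m] by (intro gadj_upd) auto

lemma cube_nbrs: assumes c: "c \<in> fst (cube m)" shows "{c'. {c,c'} \<in> snd (cube m)} = flip c ` {..<m}"
proof (intro set_eqI iffI)
  fix c' assume "c' \<in> {c'. {c,c'} \<in> snd (cube m)}"
  then have c': "c' \<in> fst (cube m)" "gadj c c'" using cube_e by auto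
  obtain i where i: "i < length c" "c!i \<noteq> c'!i" using gadj_ex[OF c'(2)] by auto
  have lc: "length c = m" using c cube_v by auto
  have e: "c' = c[i := c'!i]" using gadj_eq_upd[OF c'(2) i] .
  have "c'!i = 3 - c!i" using c c' i lc unfolding cube_v by fastforce
  then have "c' = flip c i" using e unfolding flip_def by simp
  then show "c' \<in> flip c ` {..<m}" using i lc by auto
next
  fix c' assume "c' \<in> flip c ` {..<m}"
  then obtain i where "i < m" "c' = flip c i" by auto
  then show "c' \<in> {c'. {c,c'} \<in> snd (cube m)}" using cube_e flip_in flip_adj c by auto
qed

lemma cube_deg: assumes c: "c \<in> fst (cube m)" shows "card {c'. {c,c'} \<in> snd (cube m)} = m"
proof -
  have "inj_on (flip c) {..<m}"
  proof (rule inj_onI)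
    fix i j assume ij: "i \<in> {..<m}" "j \<in> {..<m}" "flip c i = flip c j"
    show "i = j"
    proof (rule ccontr)
      assume "i \<noteq> j"
      have lc: "length c = m" "c!i = 1 \<or> c!i = 2" using c ij cube_v by auto
      have "flip c i ! i = 3 - c!i" "flip c j ! i = c!i" using lc ij(1,2) \<open>i\<noteq>j\<close> unfolding flip_def by auto
      moreover have "flip c i ! i = flip c j ! i" using ij(3) by simp
      ultimately show False using lc(2) by auto
    qed
  qed
  then show ?thesis unfolding cube_nbrs[OF c] by (simp add: card_image)
qed

lemma cube_sq:
  assumes c: "c \<in> fst (cube m)" and e1: "{c,c1} \<in> snd (cube m)" and e2: "{c,c2} \<in> snd (cube m)"
    and ne: "c1 \<noteq> c2"
  shows "\<exists>z. z \<in> fst (cube m) \<and> z \<noteq> c \<and> {c1,z} \<in> snd (cube m) \<and> {c2,z} \<in> snd (cube m)"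
proof -
  obtain i where i: "i < m" "c1 = flip c i" using e1 cube_nbrs[OF c] by blast
  obtain j where j: "j < m" "c2 = flip c j" using e2 cube_nbrs[OF c] by blast
  have ij: "i \<noteq> j" using i j ne by auto
  have lc: "length c = m" "c!i = 1 \<or> c!i = 2" using c i cube_v by auto
  define z where "z = flip c1 j"
  have c1v: "c1 \<in> fst (cube m)" and c2v: "c2 \<in> fst (cube m)" using flip_in c i j by auto
  have zv: "z \<in> fst (cube m)" using flip_in[OF c1v j(1)] z_def by simp
  have z2: "z = flip c2 i" unfolding z_def i j flip_def using ij by (simp add: list_update_swap)
  have "z!i \<noteq> c!i" unfolding z_def i flip_def using ij lc i by auto
  then have "z \<noteq> c" by auto
  moreover have "{c1,z} \<in> snd (cube m)" using cube_nbrs[OF c1v] j z_def by blast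
  moreover have "{c2,z} \<in> snd (cube m)" using cube_nbrs[OF c2v] i z2 by blast
  ultimately show ?thesis using zv by blast
qed

lemma subcube_box:
  assumes sub: "subgraph H (Grid ns)" and iso: "graph_iso H (cube m)" and lns: "length ns = m"
  shows "\<exists>a. length a = m \<and> fst H = box a"
proof -
  obtain \<phi> where bij: "bij_betw \<phi> (fst H) (fst (cube m))" and
    pres: "\<forall>u\<in>fst H. \<forall>v\<in>fst H. {u, v} \<in> snd H \<longleftrightarrow> {\<phi> u, \<phi> v} \<in> snd (cube m)"
    using iso unfolding graph_iso_def by blast
  define V where "V = fst H"
  define A where "A u v \<longleftrightarrow> {u,v} \<in> snd H" for u v
  have VG: "V \<subseteq> grid_verts ns" and EG: "snd H \<subseteq> grid_edges ns" and EV: "\<forall>e\<in>snd H. e \<subseteq> V"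
    using sub unfolding subgraph_def Grid_def V_def by auto
  have cardV: "card V = 2^m" using bij_betw_same_card[OF bij] cube_card V_def by simp
  have fin: "finite V" using bij_betw_finite[OF bij] cube_card V_def by simp
  have len: "\<forall>v\<in>V. length v = m" using VG lns unfolding grid_verts_def by auto
  have Ap: "u\<in>V \<and> v\<in>V \<and> gadj u v" if "A u v" for u v
  proof -
    have "{u,v} \<in> grid_edges ns" "{u,v} \<subseteq> V" using that EG EV unfolding A_def by auto
    then show ?thesis using edge_iff by auto
  qed
  have sym: "A v u" if "A u v" for u v using that unfolding A_def by (simp add: insert_commute)
  have inj: "inj_on \<phi> V" using bij V_def bij_betw_def by auto
  have img: "\<phi> ` {u. A v u} = {c. {\<phi> v, c} \<in> snd (cube m)}" if v: "v \<in> V" for v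
  proof (intro set_eqI iffI)
    fix c assume "c \<in> \<phi> ` {u. A v u}"
    then obtain u where au: "A v u" "c = \<phi> u" by auto
    have "u \<in> V" using Ap au by blast
    then have "{\<phi> v, \<phi> u} \<in> snd (cube m)" using pres v au unfolding A_def V_def by blast
    then show "c \<in> {c. {\<phi> v, c} \<in> snd (cube m)}" using au by simp
  next
    fix c assume "c \<in> {c. {\<phi> v, c} \<in> snd (cube m)}"
    then have ce: "{\<phi> v, c} \<in> snd (cube m)" by simp
    then have "c \<in> fst (cube m)" using cube_e by auto
    then obtain u where u: "u \<in> V" "c = \<phi> u" using bij unfolding bij_betw_def V_def by auto
    then have "A v u" using pres v ce unfolding A_def V_def by blast
    then show "c \<in> \<phi> ` {u. A v u}" using u by auto
  qed
  have deg: "card {u. A v u} = m" if v: "v \<in> V" for v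
  proof -
    have "{u. A v u} \<subseteq> V" using Ap by auto
    then have "card (\<phi> ` {u. A v u}) = card {u. A v u}" using inj by (meson card_image inj_on_subset)
    moreover have "\<phi> v \<in> fst (cube m)" using bij v unfolding bij_betw_def V_def by auto
    ultimately show ?thesis using img[OF v] cube_deg by simp
  qed
  have sq: "\<exists>z. z \<noteq> v \<and> A u z \<and> A w z" if h: "v\<in>V" "A v u" "A v w" "u \<noteq> w" for v u w
  proof -
    have uw: "u \<in> V" "w \<in> V" using Ap h by auto
    have "{\<phi> v, \<phi> u} \<in> snd (cube m)" "{\<phi> v, \<phi> w} \<in> snd (cube m)" using pres h uw unfolding A_def V_def by blast+
    moreover have "\<phi> u \<noteq> \<phi> w" using inj uw h(4) by (meson inj_on_contraD)
    moreover have "\<phi> v \<in> fst (cube m)" using bij h unfolding bij_betw_def V_def by auto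
    ultimately obtain z' where z': "z' \<in> fst (cube m)" "z' \<noteq> \<phi> v" "{\<phi> u, z'} \<in> snd (cube m)" "{\<phi> w, z'} \<in> snd (cube m)"
      using cube_sq by blast
    obtain z where z: "z \<in> V" "z' = \<phi> z" using z'(1) bij unfolding bij_betw_def V_def by auto
    have "A u z" "A w z" using pres z z' uw unfolding A_def V_def by blast+
    moreover have "z \<noteq> v" using z z' by auto
    ultimately show ?thesis by blast
  qed
  have "\<exists>a. length a = m \<and> V = box a"
    by (rule core[OF fin cardV len Ap sym deg sq]) auto
  then show ?thesis unfolding V_def .
qed



lemma box_LS: "box a = LS (length a) (\<lambda>i. {a!i, Suc (a!i)})"
  unfolding box_def LS_def by auto

lemma box_card: "finite (box a) \<and> card (box a) = 2^(length a)"
proof -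
  have "card (box a) = (\<Prod>i<length a. card {a!i, Suc (a!i)})"
    using LS_card[of "length a" "\<lambda>i. {a!i, Suc (a!i)}"] box_LS by simp
  moreover have "finite (box a)" using LS_card[of "length a" "\<lambda>i. {a!i, Suc (a!i)}"] box_LS by simp
  ultimately show ?thesis by (simp add: numeral_2_eq_2)
qed

lemma gadj_cong:
  assumes "length u = m" "length v = m" "length u' = m" "length v' = m"
    and "\<And>i. i<m \<Longrightarrow> (u!i = Suc(v!i) \<longleftrightarrow> u'!i = Suc(v'!i)) \<and> (v!i = Suc(u!i) \<longleftrightarrow> v'!i = Suc(u'!i)) \<and> (u!i = v!i \<longleftrightarrow> u'!i = v'!i)"
  shows "gadj u v \<longleftrightarrow> gadj u' v'"
  unfolding gadj_def using assms by (metis (no_types, opaque_lifting))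

lemma box_iso:
  assumes la: "length a = m" and bg: "box a \<subseteq> grid_verts ns"
  shows "graph_iso (box a, {e \<in> grid_edges ns. e \<subseteq> box a}) (cube m)"
proof -
  define \<phi> where "\<phi> y = map (\<lambda>i. Suc (y!i - a!i)) [0..<m]" for y
  define \<psi> where "\<psi> c = map (\<lambda>i. a!i + c!i - 1) [0..<m]" for c
  have bx: "y \<in> box a \<longleftrightarrow> length y = m \<and> (\<forall>i<m. y!i = a!i \<or> y!i = Suc (a!i))" for y
    unfolding box_def la by simp
  have phin: "\<phi> y ! i = Suc (y!i - a!i)" if "i<m" for y i using that unfolding \<phi>_def by simp
  have phiv: "\<phi> y \<in> fst (cube m)" if "y \<in> box a" for y
    using that unfolding cube_v bx by (auto simp: phin \<phi>_def)
  have inj: "inj_on \<phi> (box a)"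
  proof (rule inj_onI)
    fix y y' assume h: "y \<in> box a" "y' \<in> box a" "\<phi> y = \<phi> y'"
    show "y = y'"
    proof (rule nth_equalityI)
      show "length y = length y'" using h bx by simp
      fix i assume "i < length y"
      then have i: "i < m" using h bx by simp
      have "\<phi> y ! i = \<phi> y' ! i" using h by simp
      then have e: "y!i - a!i = y'!i - a!i" using phin[OF i] by simp
      have "y!i = a!i \<or> y!i = Suc(a!i)" "y'!i = a!i \<or> y'!i = Suc(a!i)" using h(1,2) i bx by auto
      then show "y!i = y'!i" using e by auto
    qed
  qed
  have surj: "\<phi> ` box a = fst (cube m)"
  proof (intro equalityI subsetI)
    fix c assume "c \<in> \<phi> ` box a" then show "c \<in> fst (cube m)" using phiv by auto
  next
    fix c assume c: "c \<in> fst (cube m)"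
    have "\<psi> c \<in> box a" using c unfolding cube_v bx \<psi>_def by auto
    moreover have "\<phi> (\<psi> c) = c"
      using c unfolding cube_v by (intro nth_equalityI) (auto simp: phin \<psi>_def, auto simp: \<phi>_def)
    ultimately show "c \<in> \<phi> ` box a" by (metis image_eqI)
  qed
  have adj: "{u,v} \<in> {e \<in> grid_edges ns. e \<subseteq> box a} \<longleftrightarrow> {\<phi> u, \<phi> v} \<in> snd (cube m)"
    if uv: "u \<in> box a" "v \<in> box a" for u v
  proof -
    have "{u,v} \<in> {e \<in> grid_edges ns. e \<subseteq> box a} \<longleftrightarrow> gadj u v" using edge_iff uv bg by auto
    also have "\<dots> \<longleftrightarrow> gadj (\<phi> u) (\<phi> v)"
    proof (rule gadj_cong[of _ m])
      show "length u = m" "length v = m" "length (\<phi> u) = m" "length (\<phi> v) = m"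
        using uv bx by (auto simp: \<phi>_def)
      fix i assume i: "i < m"
      have "u!i = a!i \<or> u!i = Suc(a!i)" "v!i = a!i \<or> v!i = Suc(a!i)" using uv i bx by auto
      then show "(u!i = Suc(v!i) \<longleftrightarrow> \<phi> u!i = Suc(\<phi> v!i)) \<and> (v!i = Suc(u!i) \<longleftrightarrow> \<phi> v!i = Suc(\<phi> u!i)) \<and> (u!i = v!i \<longleftrightarrow> \<phi> u!i = \<phi> v!i)"
        using phin[OF i] by auto
    qed
    also have "\<dots> \<longleftrightarrow> {\<phi> u, \<phi> v} \<in> snd (cube m)" using cube_e phiv uv by auto
    finally show ?thesis .
  qed
  show ?thesis unfolding graph_iso_def
    by (rule exI[of _ \<phi>]) (use inj surj adj in \<open>auto simp: bij_betw_def\<close>)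
qed



lemma parity_half:
  assumes la: "length a > 0"
  shows "card {y\<in>box a. even (sum_list y)} = card {y\<in>box a. odd (sum_list y)}"
proof -
  define g where "g y = y[0 := (if y!0 = a!0 then Suc (a!0) else a!0)]" for y
  have bx: "y \<in> box a \<longleftrightarrow> length y = length a \<and> (\<forall>i<length a. y!i = a!i \<or> y!i = Suc (a!i))" for y
    unfolding box_def by simp
  have gbox: "g y \<in> box a" if "y \<in> box a" for y
    using that la unfolding bx g_def by (auto simp: nth_list_update)
  have gg: "g (g y) = y" if "y \<in> box a" for y
  proof -
    have l: "length y > 0" "y!0 = a!0 \<or> y!0 = Suc (a!0)" using that la bx by auto
    show ?thesis
    proof (cases "y!0 = a!0")
      case True
      have "g y = y[0 := Suc (a!0)]" unfolding g_def using True by simp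
      moreover have "g y ! 0 = Suc (a!0)" using calculation l by simp
      ultimately have "g (g y) = y[0 := a!0]" unfolding g_def by simp
      then show ?thesis using True by (metis list_update_id)
    next
      case False
      then have f: "y!0 = Suc (a!0)" using l(2) by blast
      have "g y = y[0 := a!0]" unfolding g_def using False by simp
      moreover have "g y ! 0 = a!0" using calculation l by simp
      ultimately have "g (g y) = y[0 := Suc (a!0)]" unfolding g_def by simp
      then show ?thesis using f by (metis list_update_id)
    qed
  qed
  have par: "even (sum_list (g y)) \<longleftrightarrow> odd (sum_list y)" if y: "y \<in> box a" for y
  proof -
    have l: "0 < length y" using y la bx by auto
    have y0: "y!0 = a!0 \<or> y!0 = Suc (a!0)" using y la bx by auto
    have le: "y!0 \<le> sum_list y" using elem_le_sum_list[OF l] .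
    have su: "sum_list (g y) = sum_list y + (if y!0 = a!0 then Suc (a!0) else a!0) - y!0"
      unfolding g_def using sum_list_update[OF l] .
    show ?thesis
    proof (cases "y!0 = a!0")
      case True
      then have "sum_list (g y) = Suc (sum_list y)" using su by simp
      then show ?thesis by simp
    next
      case False
      then have "y!0 = Suc (a!0)" using y0 by simp
      then have "sum_list (g y) + 1 = sum_list y" using su le False by simp
      then show ?thesis by (metis even_Suc Suc_eq_plus1)
    qed
  qed
  have inj: "inj_on g (box a)" by (metis gg inj_onI)
  have fin: "finite (box a)" using box_card by simp
  have "card {y\<in>box a. even (sum_list y)} \<le> card {y\<in>box a. odd (sum_list y)}"
    by (rule card_inj_on_le[of g]) (use inj gbox par fin in \<open>auto intro: inj_on_subset\<close>)
  moreover have "card {y\<in>box a. odd (sum_list y)} \<le> card {y\<in>box a. even (sum_list y)}"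
    by (rule card_inj_on_le[of g]) (use inj gbox par fin in \<open>auto intro: inj_on_subset\<close>)
  ultimately show ?thesis by simp
qed

lemma box_snoc: "box (a' @ [x0]) = (\<lambda>(y,x). y @ [x]) ` (box a' \<times> {x0, Suc x0})"
proof (intro set_eqI iffI)
  fix v assume v: "v \<in> box (a' @ [x0])"
  then have lv: "length v = Suc (length a')" unfolding box_def by simp
  have vs: "v = take (length a') v @ [v ! length a']"
    using lv by (metis append_butlast_last_id butlast_conv_take diff_Suc_1 last_conv_nth length_greater_0_conv zero_less_Suc)
  have "take (length a') v \<in> box a'" unfolding box_def
  proof (intro CollectI conjI allI impI)
    show "length (take (length a') v) = length a'" using lv by simp
    fix i assume i: "i < length a'"
    have "i < length (a'@[x0])" using i by simp
    then have "v!i = (a'@[x0])!i \<or> v!i = Suc ((a'@[x0])!i)" using v unfolding box_def by blast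
    then show "take (length a') v ! i = a' ! i \<or> take (length a') v ! i = Suc (a' ! i)"
      using i by (simp add: nth_append)
  qed
  moreover have "v ! length a' \<in> {x0, Suc x0}"
  proof -
    have "length a' < length (a'@[x0])" by simp
    then have "v!length a' = (a'@[x0])!length a' \<or> v!length a' = Suc ((a'@[x0])!length a')"
      using v unfolding box_def by blast
    then show ?thesis by simp
  qed
  ultimately have "(take (length a') v, v ! length a') \<in> box a' \<times> {x0, Suc x0}" by simp
  then show "v \<in> (\<lambda>(y,x). y @ [x]) ` (box a' \<times> {x0, Suc x0})"
    by (rule image_eqI[rotated]) (simp only: case_prod_conv, rule vs)
next
  fix v assume "v \<in> (\<lambda>(y,x). y @ [x]) ` (box a' \<times> {x0, Suc x0})"
  then obtain y x where "v = y @ [x]" "y \<in> box a'" "x \<in> {x0, Suc x0}" by auto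
  then show "v \<in> box (a' @ [x0])" unfolding box_def by (auto simp: nth_append less_Suc_eq)
qed



lemma snoc_take: "length xs = Suc m \<Longrightarrow> xs = take m xs @ [xs!m]"
  by (metis append_butlast_last_id butlast_conv_take diff_Suc_1 last_conv_nth length_greater_0_conv zero_less_Suc)

lemma divmod_uniq:
  fixes a b k l N :: nat
  assumes "a < N" "b < N" "a + k*N = b + l*N"
  shows "a = b \<and> k = l"
proof -
  have "(a + k*N) mod N = a" "(b + l*N) mod N = b" using assms(1,2) by simp_all
  then have ab: "a = b" using assms(3) by metis
  then have "k*N = l*N" using assms(3) by simp
  then show ?thesis using ab assms(1) by simp
qed

lemma sum_box_snoc:
  "sum g (box (a'@[x0])) = (\<Sum>y\<in>box a'. g (y@[x0]) + g (y@[Suc x0]))"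
proof -
  have inj: "inj_on (\<lambda>(y,x). y @ [x]) (box a' \<times> {x0, Suc x0})"
    by (rule inj_onI) auto
  have fin: "finite (box a')" using box_card by simp
  have "sum g (box (a'@[x0])) = sum (g \<circ> (\<lambda>(y,x). y @ [x])) (box a' \<times> {x0, Suc x0})"
    unfolding box_snoc by (rule sum.reindex[OF inj])
  also have "\<dots> = (\<Sum>y\<in>box a'. \<Sum>x\<in>{x0, Suc x0}. g (y @ [x]))"
  proof -
    have "g \<circ> (\<lambda>(y,x). y @ [x]) = (\<lambda>(y,x). g (y @ [x]))" by (auto simp: fun_eq_iff)
    then show ?thesis by (simp only: sum.cartesian_product)
  qed
  also have "\<dots> = (\<Sum>y\<in>box a'. g (y@[x0]) + g (y@[Suc x0]))" by simp
  finally show ?thesis .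
qed



theorem lemma5:
  fixes d :: nat and ns :: "nat list" and ft :: "nat list \<Rightarrow> nat" and S :: nat
  assumes "d \<ge> 3"
    and "length ns = d"
    and "\<forall>i j. i \<le> j \<and> j < d \<longrightarrow> ns!j \<le> ns!i"
    and "ns!(d-1) \<ge> 2"
    and "magic_labeling (Grid (take (d-1) ns)) (cube (d-1)) ft S"
  shows "magic_labeling (Grid ns) (cube d)
     (\<lambda>xs. if even (sum_list (take (d-1) xs))
           then ft (take (d-1) xs) + (xs!(d-1) - 1) * prod_list (take (d-1) ns)
           else ft (take (d-1) xs) + (ns!(d-1) - xs!(d-1)) * prod_list (take (d-1) ns))
     (2 * S + 2^(d-1) * (ns!(d-1) - 1) * prod_list (take (d-1) ns))"
proof -
  define m where "m = d - 1"
  have dm: "d = Suc m" using assms(1) m_def by simp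
  have m2: "m \<ge> 2" using assms(1) m_def by simp
  define n where "n = ns!m"
  define ns' where "ns' = take m ns"
  define N where "N = prod_list ns'"
  have n2: "n \<ge> 2" using assms(4) m_def n_def by simp
  have lns': "length ns' = m" using assms(2) dm ns'_def by simp
  have nsdec: "ns = ns' @ [n]" using snoc_take[of ns m] assms(2) dm ns'_def n_def by simp
  have mag: "bij_betw ft (grid_verts ns') {1..card (grid_verts ns')}"
    "\<And>H'. subgraph H' (Grid ns') \<Longrightarrow> graph_iso H' (cube m) \<Longrightarrow> (\<Sum>v\<in>fst H'. ft v) = S"
    using assms(5) unfolding magic_labeling_def m_def[symmetric] ns'_def[symmetric]
    by (auto simp: Grid_def)
  have cardG': "card (grid_verts ns') = N" using card_grid N_def by simp
  have ftr: "ft y \<in> {1..N}" if "y \<in> grid_verts ns'" for y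
    using mag(1) that cardG' unfolding bij_betw_def by auto
  have ftinj: "inj_on ft (grid_verts ns')" using mag(1) unfolding bij_betw_def by simp
  have Npos: "N > 0"
  proof -
    have "grid_verts ns' \<noteq> {}"
    proof -
      have "replicate m 1 \<in> grid_verts ns'" unfolding grid_verts_def
      proof (intro CollectI conjI allI impI)
        show "length (replicate m 1) = length ns'" using lns' by simp
        fix i assume "i < length ns'"
        then have i: "i < m" using lns' by simp
        then have "ns!m \<le> ns!i" using assms(3) dm by auto
        show "1 \<le> replicate m (1::nat) ! i" using i by simp
        show "replicate m 1 ! i \<le> ns' ! i" using i n2 \<open>ns!m \<le> ns!i\<close> unfolding ns'_def n_def by simp
      qed
      then show ?thesis by auto
    qed
    then show ?thesis using cardG' card_grid[of ns'] by (metis card_gt_0_iff)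
  qed
  define k where "k v = (if even (sum_list (take m v)) then v!m - 1 else n - v!m)" for v
  define f where "f v = ft (take m v) + k v * N" for v
  have GV: "take m v \<in> grid_verts ns' \<and> 1 \<le> v!m \<and> v!m \<le> n \<and> v = take m v @ [v!m]"
    if v: "v \<in> grid_verts ns" for v
  proof -
    have lv: "length v = Suc m" using v assms(2) dm unfolding grid_verts_def by simp
    have "take m v \<in> grid_verts ns'" unfolding grid_verts_def
    proof (intro CollectI conjI allI impI)
      show "length (take m v) = length ns'" using lv lns' by simp
      fix i assume "i < length ns'"
      then have i: "i < m" "i < length ns" using lns' assms(2) dm by auto
      then have "1 \<le> v!i \<and> v!i \<le> ns!i" using v unfolding grid_verts_def by blast
      then show "1 \<le> take m v ! i" "take m v ! i \<le> ns' ! i" using i unfolding ns'_def by simp_all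
    qed
    moreover have "1 \<le> v!m \<and> v!m \<le> n" using v assms(2) dm unfolding grid_verts_def n_def by simp
    moreover have "v = take m v @ [v!m]" using snoc_take[OF lv] .
    ultimately show ?thesis by blast
  qed
  have GV2: "y @ [x] \<in> grid_verts ns" if "y \<in> grid_verts ns'" "1 \<le> x" "x \<le> n" for y x
    using that unfolding grid_verts_def nsdec by (auto simp: nth_append less_Suc_eq)
  have kb: "k v \<le> n - 1" if "v \<in> grid_verts ns" for v
    using GV[OF that] unfolding k_def by auto
  have feq: "(\<lambda>xs. if even (sum_list (take (d-1) xs))
           then ft (take (d-1) xs) + (xs!(d-1) - 1) * prod_list (take (d-1) ns)
           else ft (take (d-1) xs) + (ns!(d-1) - xs!(d-1)) * prod_list (take (d-1) ns)) = f"
    unfolding f_def k_def N_def ns'_def n_def m_def by (auto simp: fun_eq_iff)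
  have ceq: "2 * S + 2^(d-1) * (ns!(d-1) - 1) * prod_list (take (d-1) ns) = 2 * S + 2^m * (n - 1) * N"
    unfolding N_def ns'_def n_def m_def by simp
  have bij: "bij_betw f (grid_verts ns) {1..card (grid_verts ns)}"
  proof -
    have cardG: "card (grid_verts ns) = N * n" using card_grid[of ns] nsdec N_def by simp
    have finG: "finite (grid_verts ns)" using card_grid by simp
    have img: "f ` grid_verts ns \<subseteq> {1..N*n}"
    proof
      fix z assume "z \<in> f ` grid_verts ns"
      then obtain v where v: "v \<in> grid_verts ns" "z = f v" by auto
      have r: "ft (take m v) \<in> {1..N}" using ftr GV[OF v(1)] by blast
      have m1: "k v * N \<le> (n - 1) * N" using kb[OF v(1)] by (rule mult_le_mono1)
      have m2: "N + (n - 1) * N = N * n" using n2 by (cases n) auto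
      have "f v \<le> N * n" using r m1 m2 unfolding f_def by (simp only: atLeastAtMost_iff) linarith
      moreover have "1 \<le> f v" using r unfolding f_def by simp
      ultimately show "z \<in> {1..N*n}" using v(2) by simp
    qed
    have inj: "inj_on f (grid_verts ns)"
    proof (rule inj_onI)
      fix v w assume v: "v \<in> grid_verts ns" and w: "w \<in> grid_verts ns" and fe: "f v = f w"
      have rv: "ft (take m v) \<in> {1..N}" using ftr GV[OF v] by blast
      have rw: "ft (take m w) \<in> {1..N}" using ftr GV[OF w] by blast
      have "(ft (take m v) - 1) + k v * N = (ft (take m w) - 1) + k w * N"
        using fe rv rw unfolding f_def by auto
      moreover have "ft (take m v) - 1 < N" "ft (take m w) - 1 < N" using rv rw by auto
      ultimately have du: "ft (take m v) - 1 = ft (take m w) - 1" "k v = k w"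
        using divmod_uniq by blast+
      then have "ft (take m v) = ft (take m w)" using rv rw by auto
      then have tk: "take m v = take m w" using ftinj GV[OF v] GV[OF w] by (meson inj_onD)
      have "v!m = w!m"
      proof (cases "even (sum_list (take m v))")
        case True
        then have "v!m - 1 = w!m - 1" using du(2) tk unfolding k_def by simp
        then show ?thesis using GV[OF v] GV[OF w] by linarith
      next
        case False
        then have "n - v!m = n - w!m" using du(2) tk unfolding k_def by simp
        then show ?thesis using GV[OF v] GV[OF w] by linarith
      qed
      then show "v = w" using GV[OF v] GV[OF w] tk by metis
    qed
    have "f ` grid_verts ns = {1..N*n}"
      by (rule card_subset_eq) (use img inj cardG in \<open>auto simp: card_image\<close>)
    then show ?thesis using inj cardG unfolding bij_betw_def by simp
  qed
  have magic: "(\<Sum>v\<in>fst H'. f v) = 2 * S + 2^m * (n - 1) * N"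
    if sub: "subgraph H' (Grid ns)" and iso: "graph_iso H' (cube d)" for H'
  proof -
    obtain a where la: "length a = d" and Hb: "fst H' = box a"
      using subcube_box[OF sub iso assms(2)] by blast
    have bG: "box a \<subseteq> grid_verts ns" using sub Hb unfolding subgraph_def Grid_def by auto
    define a' where "a' = take m a"
    define x0 where "x0 = a!m"
    have la': "length a' = m" using la dm a'_def by simp
    have adec: "a = a' @ [x0]" using snoc_take[of a m] la dm a'_def x0_def by simp
    have aa: "a \<in> box a" unfolding box_def by simp
    have x01: "1 \<le> x0" using GV[of a] aa bG x0_def by auto
    have "a[m := Suc x0] \<in> box a" unfolding box_def using la dm x0_def by (auto simp: nth_list_update)
    then have "a[m := Suc x0] ! m \<le> n" using GV[of "a[m := Suc x0]"] bG by blast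
    then have x0n: "Suc x0 \<le> n" using la dm by simp
    have tk: "take m (y @ [x]) = y" "(y @ [x]) ! m = x" if "y \<in> box a'" for y x
      using that la' unfolding box_def by (auto simp: nth_append)
    have bG': "box a' \<subseteq> grid_verts ns'"
    proof
      fix y assume y: "y \<in> box a'"
      have "y @ [x0] \<in> box a" unfolding adec box_snoc using y by auto
      then have "take m (y @ [x0]) \<in> grid_verts ns'" using GV bG by blast
      then show "y \<in> grid_verts ns'" using tk[OF y] by simp
    qed
    have Sft: "(\<Sum>y\<in>box a'. ft y) = S"
    proof -
      have "subgraph (box a', {e \<in> grid_edges ns'. e \<subseteq> box a'}) (Grid ns')"
        unfolding subgraph_def Grid_def using bG' by auto
      moreover have "graph_iso (box a', {e \<in> grid_edges ns'. e \<subseteq> box a'}) (cube m)"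
        by (rule box_iso[OF la' bG'])
      ultimately show ?thesis using mag(2) by fastforce
    qed
    define \<alpha> where "\<alpha> = (x0 - 1 + x0) * N"
    define \<beta> where "\<beta> = (n - x0 + (n - Suc x0)) * N"
    have pair: "f (y @ [x0]) + f (y @ [Suc x0]) = 2 * ft y + (if even (sum_list y) then \<alpha> else \<beta>)"
      if y: "y \<in> box a'" for y
      unfolding f_def k_def tk[OF y] \<alpha>_def \<beta>_def by (simp add: add_mult_distrib)
    define E where "E = {y\<in>box a'. even (sum_list y)}"
    define Od where "Od = {y\<in>box a'. odd (sum_list y)}"
    have finb: "finite (box a')" using box_card by simp
    have EO: "card E = card Od" unfolding E_def Od_def by (rule parity_half) (use la' m2 in simp)
    have "card (box a') = card E + card Od"
    proof -
      have "box a' = E \<union> Od" "E \<inter> Od = {}" unfolding E_def Od_def by auto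
      then show ?thesis using finb by (metis card_Un_disjoint finite_Un)
    qed
    then have c2: "2 * card E = 2^m" using EO box_card[of a'] la' by simp
    have hsum: "(\<Sum>y\<in>box a'. (if even (sum_list y) then \<alpha> else \<beta>)) = card E * \<alpha> + card Od * \<beta>"
    proof -
      have "(\<Sum>y\<in>box a'. (if even (sum_list y) then \<alpha> else \<beta>)) =
          (\<Sum>y\<in>box a' \<inter> {y. even (sum_list y)}. \<alpha>) + (\<Sum>y\<in>box a' \<inter> - {y. even (sum_list y)}. \<beta>)"
        by (rule sum.If_cases[OF finb])
      also have "box a' \<inter> {y. even (sum_list y)} = E" unfolding E_def by auto
      also have "box a' \<inter> - {y. even (sum_list y)} = Od" unfolding Od_def by auto
      finally show ?thesis by simp
    qed
    have ab: "\<alpha> + \<beta> = 2 * (n - 1) * N"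
    proof -
      have "x0 - 1 + x0 + (n - x0 + (n - Suc x0)) = 2 * (n - 1)" using x01 x0n by simp
      then show ?thesis unfolding \<alpha>_def \<beta>_def by (metis add_mult_distrib)
    qed
    have "(\<Sum>v\<in>fst H'. f v) = (\<Sum>y\<in>box a'. f (y @ [x0]) + f (y @ [Suc x0]))"
      unfolding Hb adec by (rule sum_box_snoc)
    also have "\<dots> = (\<Sum>y\<in>box a'. 2 * ft y + (if even (sum_list y) then \<alpha> else \<beta>))"
      using pair by (rule sum.cong[OF refl])
    also have "\<dots> = 2 * (\<Sum>y\<in>box a'. ft y) + (\<Sum>y\<in>box a'. (if even (sum_list y) then \<alpha> else \<beta>))"
      by (simp add: sum.distrib sum_distrib_left)
    also have "\<dots> = 2 * S + card E * (\<alpha> + \<beta>)" using Sft hsum EO by (simp add: add_mult_distrib2)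
    also have "card E * (\<alpha> + \<beta>) = 2^m * (n - 1) * N"
      using ab c2 by (metis mult.assoc mult.left_commute)
    finally show ?thesis .
  qed
  have "magic_labeling (Grid ns) (cube d) f (2 * S + 2^m * (n - 1) * N)"
    unfolding magic_labeling_def using bij magic by (auto simp: Grid_def)
  then show ?thesis unfolding feq ceq .
qed


end
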